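(* Let $\mathbb{F}$ be a field, $n\ge1$ and $k\ge2$. The maps $\mathcal{F}\mapsto\varphi(\mathcal{F})$ and $S\mapsto\psi(S)$ are mutually inverse bijections between the set of all flags in $\mathbb{F}^n$ of length $k$ and the set of all $k$-maximal nilpotent subsemigroups of $M(n,\mathbb{F})$.
   Context: $M(n,\mathbb{F})$ is the semigroup of $n\times n$ matrices over $\mathbb{F}$, identified with linear operators on $\mathbb{F}^n$. A flag of length $k$ is a chain $0=V_0\subsetneq V_1\subsetneq\cdots\subsetneq V_k=\mathbb{F}^n$ of subspaces; $\varphi(\mathcal{F})=\{a\in M(n,\mathbb{F}) : a(V_i)\subseteq V_{i-1}\ \forall i\}$. A semigroup $S$ with zero is nilpotent of nilpotency degree $k$ if all products of $k$ elements vanish and some product of $k-1$ elements does not. For a nilpotent subsemigroup $S$ of nilpotency degree $k$, with $S^i(\mathbb{F}^n)=\{a_1\cdots a_i(v): a_j\in S, v\in\mathbb{F}^n\}$ and $\langle\cdot\rangle$ the linear span, $\psi(S)$ is the flag $0\subset\langle S^{k-1}(\mathbb{F}^n)\rangle\subset\cdots\subset\langle S(\mathbb{F}^n)\rangle\subset\mathbb{F}^n$. A nilpotent subsemigroup of nilpotency degree $k$ is $k$-maximal if it is not properly contained in another nilpotent subsemigroup of $M(n,\mathbb{F})$ of nilpotency degree $k$. *)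

theory Defs
  imports "HOL-Analysis.Analysis"
begin

text \<open>Matrices in M(n,F) are elements of type 'a^'n^'n ('a a field, 'n a finite
  index type with CARD('n) = n), acting on F^n = 'a^'n via (*v).\<close>

definition is_flag :: "nat \<Rightarrow> ('a::field ^ 'n) set list \<Rightarrow> bool" where
  "is_flag k Vs \<longleftrightarrow> length Vs = k + 1 \<and>
     (\<forall>i\<le>k. vec.subspace (Vs ! i)) \<and>
     Vs ! 0 = {0} \<and> Vs ! k = UNIV \<and>
     (\<forall>i<k. Vs ! i \<subset> Vs ! (Suc i))"

definition phi :: "('a::field ^ 'n) set list \<Rightarrow> ('a ^ 'n ^ 'n) set" where
  "phi Vs = {a. \<forall>i\<in>{1..<length Vs}. (\<lambda>v. a *v v) ` (Vs ! i) \<subseteq> Vs ! (i - 1)}"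

definition mprod :: "('a::field ^ 'n ^ 'n) list \<Rightarrow> 'a ^ 'n ^ 'n" where
  "mprod xs = foldr (**) xs (mat 1)"

definition subsemigroup :: "('a::field ^ 'n ^ 'n) set \<Rightarrow> bool" where
  "subsemigroup S \<longleftrightarrow> (\<forall>a\<in>S. \<forall>b\<in>S. a ** b \<in> S)"

definition nilpotent_of_degree :: "nat \<Rightarrow> ('a::field ^ 'n ^ 'n) set \<Rightarrow> bool" where
  "nilpotent_of_degree k S \<longleftrightarrow> subsemigroup S \<and>
     (\<forall>xs. length xs = k \<and> set xs \<subseteq> S \<longrightarrow> mprod xs = 0) \<and>
     (\<exists>xs. length xs = k - 1 \<and> set xs \<subseteq> S \<and> mprod xs \<noteq> 0)"

definition k_maximal :: "nat \<Rightarrow> ('a::field ^ 'n ^ 'n) set \<Rightarrow> bool" where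
  "k_maximal k S \<longleftrightarrow> nilpotent_of_degree k S \<and>
     \<not> (\<exists>T. nilpotent_of_degree k T \<and> S \<subset> T)"

definition Spow_image :: "('a::field ^ 'n ^ 'n) set \<Rightarrow> nat \<Rightarrow> ('a ^ 'n) set" where
  "Spow_image S i = {mprod xs *v v | xs v. length xs = i \<and> set xs \<subseteq> S}"

definition psi :: "nat \<Rightarrow> ('a::field ^ 'n ^ 'n) set \<Rightarrow> ('a ^ 'n) set list" where
  "psi k S = map (\<lambda>i. vec.span (Spow_image S (k - i))) [0..<k+1]"

end

theory Submission
  imports Defs
begin

lemma mprod_Nil[simp]: "mprod [] = mat 1" by (simp add: mprod_def)
lemma mprod_Cons[simp]: "mprod (a # xs) = a ** mprod xs" by (simp add: mprod_def)
lemma mprod_Cons_apply: "mprod (a # xs) *v v = a *v (mprod xs *v v)"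
  by (simp add: matrix_vector_mul_assoc)

lemma foldr_mul_shift: "foldr (**) xs (b :: 'a::field^'n^'n) = foldr (**) xs (mat 1) ** b"
  by (induction xs) (auto simp: matrix_mul_assoc)

lemma mprod_snoc: "mprod (xs @ [a]) = mprod xs ** a"
  unfolding mprod_def by (simp add: foldr_mul_shift[of xs a])

lemma rank_map:
  fixes U :: "('a::field ^ 'n) set"
  assumes U: "vec.subspace U" and w: "w \<notin> U" and u: "u \<in> U"
  shows "\<exists>a::'a^'n^'n. a *v w = u \<and> (\<forall>v\<in>U. a *v v = 0) \<and> (\<forall>v. a *v v \<in> U)"
proof -
  obtain B where B: "B \<subseteq> U" "vec.independent B" "U \<subseteq> vec.span B"
    using vec.maximal_independent_subset_extend[of "{}" U] vec.independent_empty by auto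
  have spanB: "vec.span B = U" using B U vec.span_minimal by blast
  have wB: "w \<notin> B" using w B by auto
  have ind: "vec.independent (insert w B)"
    using B(2) w wB spanB by (simp add: vec.independent_insert)
  obtain g where g: "Vector_Spaces.linear (*s) (*s) g"
     "\<forall>x\<in>insert w B. g x = (if x = w then u else 0)"
     "range g = vec.span ((\<lambda>x. if x = w then u else 0) ` insert w B)"
    using vec.linear_independent_extend_subspace[OF ind, where f="\<lambda>x. if x = w then u else 0"] by blast
  have rg: "range g \<subseteq> U"
    unfolding g(3) by (rule vec.span_minimal) (use U u vec.subspace_0 in auto)
  have gB: "\<And>x. x \<in> B \<Longrightarrow> g x = 0" using g(2) wB by auto
  have z: "\<forall>v\<in>U. g v = 0"
    using vec.linear_eq_0_on_span[OF g(1) gB] spanB by blast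
  show ?thesis
    apply (rule exI[of _ "matrix g"])
    using matrix_works[OF g(1)] g(2) z rg by auto
qed

lemma flag_len: "is_flag k Vs \<Longrightarrow> length Vs = k + 1" unfolding is_flag_def by blast
lemma flag_0: "is_flag k Vs \<Longrightarrow> Vs ! 0 = {0}" unfolding is_flag_def by blast
lemma flag_k: "is_flag k Vs \<Longrightarrow> Vs ! k = UNIV" unfolding is_flag_def by blast
lemma flag_step:
  assumes "is_flag k Vs" "i < k" shows "Vs ! i \<subset> Vs ! Suc i"
proof -
  have "\<forall>i<k. Vs ! i \<subset> Vs ! Suc i" using assms(1) unfolding is_flag_def by (elim conjE)
  then show ?thesis using assms(2) by iprover
qed

lemma flag_mono:
  assumes F: "is_flag k Vs" and ij: "i \<le> j" "j \<le> k"
  shows "Vs ! i \<subseteq> Vs ! j"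
  using ij
proof (induction j)
  case 0 then show ?case by simp
next
  case (Suc j)
  show ?case
  proof (cases "i = Suc j")
    case True then show ?thesis by simp
  next
    case False
    have "i \<le> j" "j \<le> k" using Suc.prems False by auto
    then have "Vs ! i \<subseteq> Vs ! j" using Suc.IH by blast
    moreover have "Vs ! j \<subseteq> Vs ! Suc j" using flag_step[OF F, of j] Suc.prems by auto
    ultimately show ?thesis by blast
  qed
qed

lemma flag_sub: "is_flag k Vs \<Longrightarrow> i \<le> k \<Longrightarrow> vec.subspace (Vs ! i)"
  unfolding is_flag_def by auto

lemma phi_step:
  assumes F: "is_flag k Vs" and a: "a \<in> phi Vs" and i: "i \<le> k" and v: "v \<in> Vs ! i"
  shows "a *v v \<in> Vs ! (i - 1)"
proof (cases "i = 0")
  case True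
  then have "v = 0" using flag_0[OF F] v by auto
  then show ?thesis using True flag_0[OF F] by auto
next
  case False
  then have "i \<in> {1..<length Vs}" using flag_len[OF F] i by auto
  then have "(\<lambda>v. a *v v) ` Vs ! i \<subseteq> Vs ! (i - 1)" using a unfolding phi_def by blast
  then show ?thesis using v by blast
qed

lemma phi_prod:
  assumes F: "is_flag k Vs" and xs: "set xs \<subseteq> phi Vs" and i: "i \<le> k" and v: "v \<in> Vs ! i"
  shows "mprod xs *v v \<in> Vs ! (i - length xs)"
  using xs
proof (induction xs)
  case Nil then show ?case using v by simp
next
  case (Cons a xs)
  then have "mprod xs *v v \<in> Vs ! (i - length xs)" by auto
  from phi_step[OF F _ _ this] Cons.prems i
  have "a *v (mprod xs *v v) \<in> Vs ! (i - length xs - 1)" by auto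
  then show ?case by (simp add: matrix_vector_mul_assoc)
qed

lemma rank_phi:
  assumes F: "is_flag k Vs" and j: "1 \<le> j" "j \<le> k" and w: "w \<notin> Vs ! (j - 1)"
    and u: "u \<in> Vs ! (j - 1)"
  shows "\<exists>a \<in> phi Vs. a *v w = u"
proof -
  have U: "vec.subspace (Vs ! (j - 1))" using flag_sub[OF F] j by auto
  obtain a where a: "a *v w = u" "\<forall>v\<in>Vs ! (j - 1). a *v v = 0" "\<forall>v. a *v v \<in> Vs ! (j - 1)"
    using rank_map[OF U w u] by blast
  have "a \<in> phi Vs"
    unfolding phi_def
  proof (safe)
    fix i v assume i: "i \<in> {1..<length Vs}" and v: "v \<in> Vs ! i"
    have ik: "i \<le> k" using i flag_len[OF F] by auto
    show "a *v v \<in> Vs ! (i - 1)"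
    proof (cases "i \<le> j - 1")
      case True
      have "Vs ! i \<subseteq> Vs ! (j - 1)" using flag_mono[OF F True] j by auto
      then have "v \<in> Vs ! (j - 1)" using v by blast
      have "vec.subspace (Vs ! (i - 1))" using flag_sub[OF F, of "i - 1"] ik by simp
      then show ?thesis using a(2) \<open>v \<in> Vs ! (j - 1)\<close> vec.subspace_0 by metis
    next
      case False
      then have "Vs ! (j - 1) \<subseteq> Vs ! (i - 1)" using flag_mono[OF F, of "j - 1" "i - 1"] ik by auto
      then show ?thesis using a(3) by blast
    qed
  qed
  then show ?thesis using a(1) by blast
qed

lemma construct:
  assumes F: "is_flag k Vs" and i: "i \<le> k" and v: "v \<in> Vs ! (k - i)"
  shows "\<exists>xs y. length xs = i \<and> set xs \<subseteq> phi Vs \<and> mprod xs *v y = v"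
  using i v
proof (induction i arbitrary: v)
  case 0 then show ?case by (intro exI[of _ "[]"] exI[of _ v]) simp
next
  case (Suc i)
  define m where "m = k - i"
  have m: "1 \<le> m" "m \<le> k" "k - Suc i = m - 1" using Suc.prems unfolding m_def by auto
  have "Vs ! (m - 1) \<subset> Vs ! Suc (m - 1)" using flag_step[OF F, of "m - 1"] m by auto
  then have "Vs ! (m - 1) \<subset> Vs ! m" using m by simp
  then obtain x where x: "x \<in> Vs ! m" "x \<notin> Vs ! (m - 1)" by blast
  obtain xs y where xs: "length xs = i" "set xs \<subseteq> phi Vs" "mprod xs *v y = x"
    using Suc.IH[of x] Suc.prems x unfolding m_def by auto
  obtain a where a: "a \<in> phi Vs" "a *v x = v"
    using rank_phi[OF F m(1,2) x(2)] Suc.prems(2) m(3) by auto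
  have 1: "mprod (a # xs) *v y = v" using xs(3) a(2) by (simp only: mprod_Cons_apply)
  have 2: "length (a # xs) = Suc i" using xs(1) by simp
  have 3: "set (a # xs) \<subseteq> phi Vs" using xs(2) a(1) by simp
  show ?case using 1 2 3 by blast
qed

lemma phi_nilpotent:
  assumes F: "is_flag k Vs" and k: "k \<ge> 2"
  shows "nilpotent_of_degree k (phi Vs)"
  unfolding nilpotent_of_degree_def
proof (intro conjI allI impI)
  show "subsemigroup (phi Vs)"
    unfolding subsemigroup_def
  proof (intro ballI)
    fix a b assume a: "a \<in> phi Vs" and b: "b \<in> phi Vs"
    show "a ** b \<in> phi Vs"
      unfolding phi_def
    proof (safe)
      fix i v assume i: "i \<in> {1..<length Vs}" and v: "v \<in> Vs ! i"
      have ik: "i \<le> k" using i flag_len[OF F] by auto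
      have "b *v v \<in> Vs ! (i - 1)" using phi_step[OF F b ik v] .
      then have "a *v (b *v v) \<in> Vs ! (i - 1 - 1)" using phi_step[OF F a, of "i - 1" "b *v v"] ik by auto
      moreover have "Vs ! (i - 1 - 1) \<subseteq> Vs ! (i - 1)" using flag_mono[OF F] ik by auto
      ultimately show "(a ** b) *v v \<in> Vs ! (i - 1)" by (auto simp: matrix_vector_mul_assoc)
    qed
  qed
next
  fix xs assume xs: "length xs = k \<and> set xs \<subseteq> phi Vs"
  have "\<forall>v. mprod xs *v v = 0 *v v"
  proof
    fix v
    have "v \<in> Vs ! k" using flag_k[OF F] by auto
    have "mprod xs *v v \<in> Vs ! (k - length xs)" using phi_prod[OF F _ _ \<open>v \<in> Vs ! k\<close>] xs by blast
    then show "mprod xs *v v = 0 *v v" using flag_0[OF F] xs by simp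
  qed
  then show "mprod xs = 0" using matrix_eq by blast
next
  have "Vs ! 0 \<subset> Vs ! Suc 0" using flag_step[OF F, of 0] k by auto
  then obtain v where v: "v \<in> Vs ! 1" "v \<noteq> 0" using flag_0[OF F] by auto
  have "v \<in> Vs ! (k - (k - 1))" using v k by auto
  from construct[OF F _ this] obtain xs y where
    xs: "length xs = k - 1" "set xs \<subseteq> phi Vs" "mprod xs *v y = v" by auto
  then have "mprod xs \<noteq> 0" using v by auto
  then show "\<exists>xs. length xs = k - 1 \<and> set xs \<subseteq> phi Vs \<and> mprod xs \<noteq> 0" using xs by blast
qed

lemma psi_phi:
  assumes F: "is_flag k Vs"
  shows "psi k (phi Vs) = Vs"
proof (rule nth_equalityI)
  show "length (psi k (phi Vs)) = length Vs" using flag_len[OF F] unfolding psi_def by simp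
next
  fix i assume "i < length (psi k (phi Vs))"
  then have i: "i \<le> k" unfolding psi_def by simp
  have A: "Spow_image (phi Vs) (k - i) = Vs ! i"
  proof
    show "Spow_image (phi Vs) (k - i) \<subseteq> Vs ! i"
    proof
      fix x assume "x \<in> Spow_image (phi Vs) (k - i)"
      then obtain xs v where x: "x = mprod xs *v v" "length xs = k - i" "set xs \<subseteq> phi Vs"
        unfolding Spow_image_def by auto
      have "v \<in> Vs ! k" using flag_k[OF F] by auto
      from phi_prod[OF F x(3) _ this] x i show "x \<in> Vs ! i" by auto
    qed
  next
    show "Vs ! i \<subseteq> Spow_image (phi Vs) (k - i)"
    proof
      fix v assume "v \<in> Vs ! i"
      then have "v \<in> Vs ! (k - (k - i))" using i by auto
      from construct[OF F _ this] obtain xs y where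
        "length xs = k - i" "set xs \<subseteq> phi Vs" "mprod xs *v y = v" by auto
      then show "v \<in> Spow_image (phi Vs) (k - i)"
        unfolding Spow_image_def by blast
    qed
  qed
  have B: "psi k (phi Vs) ! i = vec.span (Spow_image (phi Vs) (k - i))"
  proof -
    have l: "i < length [0..<k+1]" using i by simp
    have e: "[0..<k+1] ! i = i" using i by (metis add_0 l length_upt minus_nat.diff_0 nth_upt)
    show ?thesis unfolding psi_def nth_map[OF l] e ..
  qed
  have sp: "vec.span (Vs ! i) = Vs ! i" using flag_sub[OF F i] by (simp only: vec.span_eq_iff)
  show "psi k (phi Vs) ! i = Vs ! i" by (simp only: B A sp)
qed

lemma Spow_0: "Spow_image S 0 = UNIV"
  unfolding Spow_image_def by auto

lemma Spow_Suc:
  "x \<in> Spow_image S (Suc i) \<longleftrightarrow> (\<exists>a w. a \<in> S \<and> w \<in> Spow_image S i \<and> x = a *v w)"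
proof
  assume "x \<in> Spow_image S (Suc i)"
  then obtain xs v where x: "x = mprod xs *v v" "length xs = Suc i" "set xs \<subseteq> S"
    unfolding Spow_image_def by blast
  then obtain a ys where xs: "xs = a # ys" by (cases xs) auto
  have "mprod ys *v v \<in> Spow_image S i" using x xs unfolding Spow_image_def by auto
  moreover have "x = a *v (mprod ys *v v)" using x(1) xs by (simp only: mprod_Cons_apply)
  ultimately show "\<exists>a w. a \<in> S \<and> w \<in> Spow_image S i \<and> x = a *v w" using x(3) xs by auto
next
  assume "\<exists>a w. a \<in> S \<and> w \<in> Spow_image S i \<and> x = a *v w"
  then obtain a w where aw: "a \<in> S" "w \<in> Spow_image S i" "x = a *v w" by blast
  then obtain ys v where w: "w = mprod ys *v v" "length ys = i" "set ys \<subseteq> S"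
    unfolding Spow_image_def by blast
  have "x = mprod (a # ys) *v v" using aw(3) w(1) by (simp only: mprod_Cons_apply)
  moreover have "length (a # ys) = Suc i" "set (a # ys) \<subseteq> S" using w aw by auto
  ultimately show "x \<in> Spow_image S (Suc i)" unfolding Spow_image_def by blast
qed

lemma Spow_anti: "Spow_image S (Suc i) \<subseteq> Spow_image S i"
proof
  fix x assume "x \<in> Spow_image S (Suc i)"
  then obtain xs v where x: "x = mprod xs *v v" "length xs = Suc i" "set xs \<subseteq> S"
    unfolding Spow_image_def by blast
  then obtain a ys where xs: "xs = ys @ [a]" by (cases xs rule: rev_cases) auto
  have "x = mprod ys *v (a *v v)" using x(1) xs by (simp add: mprod_snoc matrix_vector_mul_assoc)
  moreover have "length ys = i" "set ys \<subseteq> S" using x xs by auto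
  ultimately show "x \<in> Spow_image S i" unfolding Spow_image_def by blast
qed

lemma Spow_mono_set: "S \<subseteq> T \<Longrightarrow> Spow_image S i \<subseteq> Spow_image T i"
  unfolding Spow_image_def by blast

lemma P_anti_le: "i \<le> j \<Longrightarrow> vec.span (Spow_image S j) \<subseteq> vec.span (Spow_image S i)"
proof (induction j rule: dec_induct)
  case base then show ?case by simp
next
  case (step j)
  have "vec.span (Spow_image S (Suc j)) \<subseteq> vec.span (Spow_image S j)"
    using Spow_anti vec.span_mono by blast
  then show ?case using step.IH by blast
qed

lemma P_image:
  assumes a: "a \<in> S"
  shows "(\<lambda>v. a *v v) ` vec.span (Spow_image S i) \<subseteq> vec.span (Spow_image S (Suc i))"
proof -
  have "(\<lambda>v. a *v v) ` Spow_image S i \<subseteq> Spow_image S (Suc i)" using a Spow_Suc by blast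
  then have "vec.span ((\<lambda>v. a *v v) ` Spow_image S i) \<subseteq> vec.span (Spow_image S (Suc i))"
    by (rule vec.span_mono)
  then show ?thesis using vec.span_image[of a "Spow_image S i"] by simp
qed

lemma P_stable:
  assumes eq: "vec.span (Spow_image S i) = vec.span (Spow_image S (Suc i))"
  shows "vec.span (Spow_image S (Suc i)) = vec.span (Spow_image S (Suc (Suc i)))"
proof
  show "vec.span (Spow_image S (Suc (Suc i))) \<subseteq> vec.span (Spow_image S (Suc i))"
    using P_anti_le[of "Suc i" "Suc (Suc i)" S] by simp
  have "Spow_image S (Suc i) \<subseteq> vec.span (Spow_image S (Suc (Suc i)))"
  proof
    fix x assume "x \<in> Spow_image S (Suc i)"
    then obtain a w where aw: "a \<in> S" "w \<in> Spow_image S i" "x = a *v w" using Spow_Suc by blast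
    have "w \<in> vec.span (Spow_image S (Suc i))" using aw(2) eq vec.span_base by blast
    then show "x \<in> vec.span (Spow_image S (Suc (Suc i)))" using P_image[OF aw(1), of "Suc i"] aw(3) by blast
  qed
  then show "vec.span (Spow_image S (Suc i)) \<subseteq> vec.span (Spow_image S (Suc (Suc i)))"
    using vec.span_minimal vec.subspace_span by blast
qed

lemma P_stable_all:
  assumes eq: "vec.span (Spow_image S i) = vec.span (Spow_image S (Suc i))" and m: "i \<le> m"
  shows "vec.span (Spow_image S m) = vec.span (Spow_image S i)"
  using m
proof (induction m rule: dec_induct)
  case base then show ?case by simp
next
  case (step m)
  show ?case
  proof (cases "m = i")
    case True then show ?thesis using eq by simp
  next
    case False
    then obtain m' where m': "m = Suc m'" "i \<le> m'" using step.hyps(1) by (cases m) auto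
    have "vec.span (Spow_image S m') = vec.span (Spow_image S i)"
      using P_anti_le[of i m' S] P_anti_le[of m' m S] step.IH m' by auto
    then have "vec.span (Spow_image S m') = vec.span (Spow_image S (Suc m'))" using step.IH m' by simp
    then show ?thesis using P_stable[of S m'] step.IH m' by simp
  qed
qed

lemma P_k:
  assumes N: "nilpotent_of_degree k S"
  shows "vec.span (Spow_image S k) = {0}"
proof -
  have "Spow_image S k \<subseteq> {0}"
  proof
    fix x assume "x \<in> Spow_image S k"
    then obtain xs v where x: "x = mprod xs *v v" "length xs = k" "set xs \<subseteq> S"
      unfolding Spow_image_def by blast
    then have "mprod xs = 0" using N unfolding nilpotent_of_degree_def by blast
    then show "x \<in> {0}" using x by simp
  qed
  then have "vec.span (Spow_image S k) \<subseteq> {0}" using vec.span_minimal vec.subspace_single_0 by blast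
  then show ?thesis using vec.span_zero by blast
qed

lemma P_strict:
  assumes N: "nilpotent_of_degree k S" and i: "i < k"
  shows "vec.span (Spow_image S (Suc i)) \<subset> vec.span (Spow_image S i)"
proof -
  have sub: "vec.span (Spow_image S (Suc i)) \<subseteq> vec.span (Spow_image S i)"
    using P_anti_le[of i "Suc i" S] by simp
  show ?thesis
  proof (rule ccontr)
    assume "\<not> ?thesis"
    then have eq: "vec.span (Spow_image S i) = vec.span (Spow_image S (Suc i))" using sub by blast
    have "vec.span (Spow_image S (k - 1)) = vec.span (Spow_image S i)"
      by (rule P_stable_all[OF eq]) (use i in linarith)
    moreover have "vec.span (Spow_image S k) = vec.span (Spow_image S i)"
      by (rule P_stable_all[OF eq]) (use i in linarith)
    ultimately have z: "vec.span (Spow_image S (k - 1)) = {0}" using P_k[OF N] by simp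
    obtain xs where xs: "length xs = k - 1" "set xs \<subseteq> S" "mprod xs \<noteq> 0"
      using N unfolding nilpotent_of_degree_def by blast
    then obtain v where v: "mprod xs *v v \<noteq> 0 *v v" using matrix_eq[of "mprod xs" 0] by blast
    have "mprod xs *v v \<in> Spow_image S (k - 1)" using xs unfolding Spow_image_def by blast
    then have "mprod xs *v v \<in> vec.span (Spow_image S (k - 1))" using vec.span_base by blast
    then show False using z v by simp
  qed
qed

lemma psi_nth:
  assumes i: "i \<le> k"
  shows "psi k S ! i = vec.span (Spow_image S (k - i))"
proof -
  have l: "i < length [0..<k+1]" using i by simp
  have e: "[0..<k+1] ! i = i" using i by (metis add_0 l length_upt minus_nat.diff_0 nth_upt)
  show ?thesis unfolding psi_def nth_map[OF l] e ..
qed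

lemma psi_flag:
  assumes N: "nilpotent_of_degree k S"
  shows "is_flag k (psi k S)"
  unfolding is_flag_def
proof (intro conjI allI impI)
  show "length (psi k S) = k + 1" unfolding psi_def by simp
next
  fix i assume "i \<le> k"
  then show "vec.subspace (psi k S ! i)" using psi_nth[of i k S] by simp
next
  show "psi k S ! 0 = {0}" using psi_nth[of 0 k S] P_k[OF N] by simp
next
  show "psi k S ! k = UNIV" using psi_nth[of k k S] Spow_0[of S] by simp
next
  fix i assume i: "i < k"
  have e: "k - i = Suc (k - Suc i)" using i by simp
  show "psi k S ! i \<subset> psi k S ! Suc i"
    using psi_nth[of i k S] psi_nth[of "Suc i" k S] i P_strict[OF N, of "k - Suc i"] e by simp
qed

lemma S_sub_phi:
  assumes N: "nilpotent_of_degree k S"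
  shows "S \<subseteq> phi (psi k S)"
proof
  fix a assume a: "a \<in> S"
  show "a \<in> phi (psi k S)"
    unfolding phi_def
  proof (safe)
    fix i v assume i: "i \<in> {1..<length (psi k S)}" and v: "v \<in> psi k S ! i"
    have ik: "i \<le> k" "1 \<le> i" using i unfolding psi_def by auto
    have e: "k - (i - 1) = Suc (k - i)" using ik by simp
    have pn: "psi k S ! i = vec.span (Spow_image S (k - i))" by (rule psi_nth[OF ik(1)])
    have "v \<in> vec.span (Spow_image S (k - i))" using v unfolding pn .
    then have "a *v v \<in> vec.span (Spow_image S (Suc (k - i)))" using P_image[OF a] by blast
    then show "a *v v \<in> psi k S ! (i - 1)" using psi_nth[of "i - 1" k S] ik e by simp
  qed
qed

lemma phi_sub_eq:
  assumes FV: "is_flag k V" and FW: "is_flag k W" and sub: "phi V \<subseteq> phi W"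
  shows "V = W"
proof -
  have le: "V ! i \<subseteq> W ! i" if i: "i \<le> k" for i
  proof -
    have "V ! i = vec.span (Spow_image (phi V) (k - i))"
      using psi_phi[OF FV] psi_nth[OF i, of "phi V"] by simp
    also have "\<dots> \<subseteq> vec.span (Spow_image (phi W) (k - i))"
      by (rule vec.span_mono[OF Spow_mono_set[OF sub]])
    also have "\<dots> = W ! i"
      using psi_phi[OF FW] psi_nth[OF i, of "phi W"] by simp
    finally show ?thesis .
  qed
  show ?thesis
  proof (rule ccontr)
    assume ne: "V \<noteq> W"
    have "\<exists>i. i \<le> k \<and> V ! i \<noteq> W ! i"
    proof (rule ccontr)
      assume "\<not> ?thesis"
      then have "\<forall>i < length V. V ! i = W ! i" using flag_len[OF FV] by auto
      then show False using ne flag_len[OF FV] flag_len[OF FW] nth_equalityI by metis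
    qed
    define i0 where "i0 = (LEAST i. i \<le> k \<and> V ! i \<noteq> W ! i)"
    have i0: "i0 \<le> k" "V ! i0 \<noteq> W ! i0"
      using LeastI_ex[OF \<open>\<exists>i. i \<le> k \<and> V ! i \<noteq> W ! i\<close>] unfolding i0_def by auto
    have below: "V ! i = W ! i" if "i < i0" for i
      using not_less_Least[of i "\<lambda>i. i \<le> k \<and> V ! i \<noteq> W ! i"] that i0(1) unfolding i0_def by auto
    have i0pos: "i0 \<noteq> 0" using i0 flag_0[OF FV] flag_0[OF FW] by auto
    obtain w where w: "w \<in> W ! i0" "w \<notin> V ! i0" using le[OF i0(1)] i0(2) by blast
    have exj: "\<exists>j. w \<in> V ! j" using flag_k[OF FV] by auto
    define j0 where "j0 = (LEAST j. w \<in> V ! j)"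
    have j0: "w \<in> V ! j0" using LeastI_ex[OF exj] unfolding j0_def .
    have j0k: "j0 \<le> k" using Least_le[of "\<lambda>j. w \<in> V ! j" k] flag_k[OF FV] unfolding j0_def by auto
    have j0i0: "i0 < j0"
    proof (rule ccontr)
      assume "\<not> i0 < j0"
      then have "V ! j0 \<subseteq> V ! i0" using flag_mono[OF FV, of j0 i0] i0(1) by auto
      then show False using j0 w(2) by blast
    qed
    have wnot: "w \<notin> V ! (j0 - 1)"
      using not_less_Least[of "j0 - 1" "\<lambda>j. w \<in> V ! j"] j0i0 unfolding j0_def by auto
    have "V ! (i0 - 1) \<subset> V ! Suc (i0 - 1)" using flag_step[OF FV, of "i0 - 1"] i0 i0pos by auto
    then have s1: "V ! (i0 - 1) \<subset> V ! i0" using i0pos by simp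
    have s2: "V ! i0 \<subseteq> V ! (j0 - 1)" using flag_mono[OF FV, of i0 "j0 - 1"] j0i0 j0k by auto
    obtain u where u: "u \<in> V ! (j0 - 1)" "u \<notin> V ! (i0 - 1)" using s1 s2 by blast
    obtain a where a: "a \<in> phi V" "a *v w = u"
      using rank_phi[OF FV _ j0k wnot u(1)] j0i0 by auto
    have "a *v w \<in> W ! (i0 - 1)" using phi_step[OF FW _ i0(1) w(1)] a(1) sub by blast
    moreover have "W ! (i0 - 1) = V ! (i0 - 1)" using below[of "i0 - 1"] i0pos by simp
    ultimately show False using a(2) u(2) by simp
  qed
qed

lemma phi_kmax:
  assumes F: "is_flag k V" and k: "k \<ge> 2"
  shows "k_maximal k (phi V)"
  unfolding k_maximal_def
proof (intro conjI notI)
  show N: "nilpotent_of_degree k (phi V)" by (rule phi_nilpotent[OF F k])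
  assume "\<exists>T. nilpotent_of_degree k T \<and> phi V \<subset> T"
  then obtain T where T: "nilpotent_of_degree k T" "phi V \<subset> T" by blast
  have "T \<subseteq> phi (psi k T)" by (rule S_sub_phi[OF T(1)])
  then have "phi V \<subseteq> phi (psi k T)" using T(2) by blast
  then have "V = psi k T" using phi_sub_eq[OF F psi_flag[OF T(1)]] by blast
  then show False using T(2) \<open>T \<subseteq> phi (psi k T)\<close> by blast
qed

lemma kmax_eq:
  assumes M: "k_maximal k S" and k: "k \<ge> 2"
  shows "phi (psi k S) = S"
proof -
  have N: "nilpotent_of_degree k S" using M unfolding k_maximal_def by blast
  have sub: "S \<subseteq> phi (psi k S)" by (rule S_sub_phi[OF N])
  have "nilpotent_of_degree k (phi (psi k S))" by (rule phi_nilpotent[OF psi_flag[OF N] k])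
  then show ?thesis using M sub unfolding k_maximal_def by blast
qed

theorem corollary9:
  fixes k :: nat
  assumes "k \<ge> 2"
  shows "(phi :: ('a::field ^ 'n) set list \<Rightarrow> _) ` {Vs. is_flag k Vs} = {S. k_maximal k S}
    \<and> (\<forall>Vs. is_flag k Vs \<longrightarrow> psi k (phi Vs) = (Vs :: ('a::field ^ 'n) set list))
    \<and> (\<forall>S. k_maximal k S \<longrightarrow> psi k S \<in> {Vs. is_flag k Vs} \<and> phi (psi k S) = (S :: ('a ^ 'n ^ 'n) set))
    \<and> bij_betw phi {Vs. is_flag k Vs} {S :: ('a ^ 'n ^ 'n) set. k_maximal k S}"
proof -
  have img: "(phi :: ('a::field ^ 'n) set list \<Rightarrow> _) ` {Vs. is_flag k Vs} = {S. k_maximal k S}"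
  proof
    show "(phi :: ('a::field ^ 'n) set list \<Rightarrow> _) ` {Vs. is_flag k Vs} \<subseteq> {S. k_maximal k S}"
      using phi_kmax assms by blast
  next
    show "{S. k_maximal k S} \<subseteq> (phi :: ('a::field ^ 'n) set list \<Rightarrow> _) ` {Vs. is_flag k Vs}"
    proof
      fix S :: "('a ^ 'n ^ 'n) set" assume "S \<in> {S. k_maximal k S}"
      then have M: "k_maximal k S" by simp
      then have N: "nilpotent_of_degree k S" unfolding k_maximal_def by blast
      show "S \<in> phi ` {Vs. is_flag k Vs}"
        using kmax_eq[OF M assms] psi_flag[OF N] by (metis image_eqI mem_Collect_eq)
    qed
  qed
  have inj: "inj_on (phi :: ('a::field ^ 'n) set list \<Rightarrow> _) {Vs. is_flag k Vs}"
    by (rule inj_onI) (metis psi_phi mem_Collect_eq)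
  show ?thesis
  proof (intro conjI allI impI)
    show "(phi :: ('a::field ^ 'n) set list \<Rightarrow> _) ` {Vs. is_flag k Vs} = {S. k_maximal k S}" by (rule img)
  next
    fix Vs :: "('a ^ 'n) set list" assume "is_flag k Vs"
    then show "psi k (phi Vs) = Vs" by (rule psi_phi)
  next
    fix S :: "('a ^ 'n ^ 'n) set" assume M: "k_maximal k S"
    then have N: "nilpotent_of_degree k S" unfolding k_maximal_def by blast
    show "psi k S \<in> {Vs. is_flag k Vs}" using psi_flag[OF N] by simp
    show "phi (psi k S) = S" by (rule kmax_eq[OF M assms])
  next
    show "bij_betw phi {Vs. is_flag k Vs} {S :: ('a ^ 'n ^ 'n) set. k_maximal k S}"
      unfolding bij_betw_def using inj img by blast
  qed
qed

end
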